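(* Let $r\ge 4$, $s\in\{2,\dots,r-1\}$, and let $A$ be an $s$-partition of $r$. Then the spectrum (with multiplicities) of the standard Laplacian of $\widehat K_r(A)$ consists of $$\frac{2r+1-\sqrt{4r+1}}{2r}\ \text{and}\ \frac{2r+1+\sqrt{4r+1}}{2r}\ \text{each with multiplicity } s-1,\qquad 1+\frac1r\ \text{with multiplicity } r-s+1,\qquad 0\ \text{with multiplicity }1,$$ and the spectrum of the signless standard Laplacian of $\widehat K_r(A)$ consists of $$\frac{2r-1-\sqrt{4r+1}}{2r}\ \text{and}\ \frac{2r-1+\sqrt{4r+1}}{2r}\ \text{each with multiplicity } s-1,\qquad 1-\frac1r\ \text{with multiplicity } r-s+1,\qquad 2\ \text{with multiplicity }1.$$ In particular these spectra depend only on $r$ and $s$.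
   Context: An $s$-partition of $r\in\mathbb N$ is a multiset $\{a_1,\dots,a_s\}$ of positive integers with $a_1+\dots+a_s=r$. $\widehat K_r$ is the graph obtained from the complete graph $K_r$ (vertices $w_1,\dots,w_r$) by attaching a pendant vertex $v_i$ to each $w_i$. For an $s$-partition $A$, $\widehat K_r(A)$ is obtained from $\widehat K_r$ by identifying the pendant vertices block-wise: $\{v_1,\dots,v_{a_1}\}$, $\{v_{a_1+1},\dots,v_{a_1+a_2}\}$, …, $\{v_{a_1+\dots+a_{s-1}+1},\dots,v_r\}$ each become one vertex, keeping all edges (so the $j$-th new vertex is adjacent to exactly the $a_j$ vertices $w_i$ of its block). The standard Laplacian is $(\Delta_G f)(v)=f(v)-\frac{1}{\deg v}\sum_{u\in N_v}f(u)$ and the signless one $(\Delta_{G^+}f)(v)=f(v)+\frac{1}{\deg v}\sum_{u\in N_v}f(u)$. *)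

theory Defs
  imports "Jordan_Normal_Form.Char_Poly"
begin

text \<open>Vertices of K_r-hat(A), for A given as a list a = [a_1,...,a_s]:
  0..r-1 are w_1..w_r; r+j (j < s) is the j-th identified pendant vertex,
  adjacent to the w_i with sum(take j a) <= i < sum(take (j+1) a).\<close>

definition nverts :: "nat \<Rightarrow> nat list \<Rightarrow> nat" where
  "nverts r a = r + length a"

definition adj :: "nat \<Rightarrow> nat list \<Rightarrow> nat \<Rightarrow> nat \<Rightarrow> bool" where
  "adj r a u v \<longleftrightarrow>
     (u < r \<and> v < r \<and> u \<noteq> v)
   \<or> (u < r \<and> r \<le> v \<and> v < r + length a \<and>
        sum_list (take (v - r) a) \<le> u \<and> u < sum_list (take (Suc (v - r)) a))
   \<or> (v < r \<and> r \<le> u \<and> u < r + length a \<and>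
        sum_list (take (u - r) a) \<le> v \<and> v < sum_list (take (Suc (u - r)) a))"

definition deg :: "nat \<Rightarrow> nat list \<Rightarrow> nat \<Rightarrow> nat" where
  "deg r a v = card {u. u < nverts r a \<and> adj r a v u}"

definition std_laplacian :: "nat \<Rightarrow> nat list \<Rightarrow> real mat" where
  "std_laplacian r a = mat (nverts r a) (nverts r a)
     (\<lambda>(v, u). (if v = u then 1 else 0) - (if adj r a v u then 1 / real (deg r a v) else 0))"

definition signless_laplacian :: "nat \<Rightarrow> nat list \<Rightarrow> real mat" where
  "signless_laplacian r a = mat (nverts r a) (nverts r a)
     (\<lambda>(v, u). (if v = u then 1 else 0) + (if adj r a v u then 1 / real (deg r a v) else 0))"

end

theory Submission
  imports Defs
begin


definition PS :: "nat list \<Rightarrow> nat \<Rightarrow> nat" where "PS a j = sum_list (take j a)"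
definition bl :: "nat list \<Rightarrow> nat \<Rightarrow> nat" where "bl a i = (LEAST j. i < PS a (Suc j))"

lemma PS_Suc: "j < length a \<Longrightarrow> PS a (Suc j) = PS a j + a ! j"
  unfolding PS_def by (simp add: take_Suc_conv_app_nth)

lemma PS_mono: "j \<le> k \<Longrightarrow> PS a j \<le> PS a k"
proof (induction k)
  case 0 then show ?case by simp
next
  case (Suc k)
  have "PS a k \<le> PS a (Suc k)" unfolding PS_def
    by (cases "k < length a") (auto simp: take_Suc_conv_app_nth)
  with Suc show ?case by (cases "j = Suc k") auto
qed

lemma PS_len: "PS a (length a) = sum_list a" unfolding PS_def by simp

context
  fixes a :: "nat list" and r :: nat
  assumes pos: "\<forall>x\<in>set a. x > 0" and sm: "sum_list a = r"
begin

lemma bl_props: assumes "i < r"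
  shows "bl a i < length a" "PS a (bl a i) \<le> i" "i < PS a (Suc (bl a i))"
proof -
  have ne: "a \<noteq> []" using assms sm by auto
  have ex: "i < PS a (Suc (length a - 1))" using ne assms sm PS_len[of a] by simp
  show 1: "i < PS a (Suc (bl a i))" unfolding bl_def by (rule LeastI, rule ex)
  have "bl a i \<le> length a - 1" unfolding bl_def by (rule Least_le, rule ex)
  then show "bl a i < length a" using ne by (cases a) auto
  show "PS a (bl a i) \<le> i"
  proof (cases "bl a i")
    case 0 then show ?thesis by (simp add: PS_def)
  next
    case (Suc m)
    have "\<not> i < PS a (Suc m)"
    proof
      assume "i < PS a (Suc m)"
      then have "bl a i \<le> m" unfolding bl_def by (rule Least_le)
      with Suc show False by simp
    qed
    then show ?thesis using Suc by simp
  qed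
qed

lemma bl_unique: assumes "j < length a" "PS a j \<le> i" "i < PS a (Suc j)"
  shows "bl a i = j"
proof -
  have ir: "i < r" using assms PS_mono[of "Suc j" "length a" a] PS_len[of a] sm by simp
  note b = bl_props[OF ir]
  show ?thesis
  proof (rule ccontr)
    assume ne: "bl a i \<noteq> j"
    show False
    proof (cases "bl a i < j")
      case True
      then have "PS a (Suc (bl a i)) \<le> PS a j" by (intro PS_mono) simp
      with b assms show False by simp
    next
      case False
      then have "PS a (Suc j) \<le> PS a (bl a i)" using ne by (intro PS_mono) simp
      with b assms show False by simp
    qed
  qed
qed

lemma bl_iff: assumes "i < r" "j < length a"
  shows "(PS a j \<le> i \<and> i < PS a (Suc j)) \<longleftrightarrow> bl a i = j"
  using bl_unique[OF assms(2)] bl_props[OF assms(1)] by auto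

lemma block_set: assumes "l < length a"
  shows "{i. i < r \<and> bl a i = l} = {PS a l ..< PS a (Suc l)}"
proof -
  have "PS a (Suc l) \<le> r" using PS_mono[of "Suc l" "length a" a] PS_len[of a] sm assms by simp
  note le = this
  show ?thesis
  proof (rule equalityI; rule subsetI)
    fix x assume "x \<in> {i. i < r \<and> bl a i = l}"
    then show "x \<in> {PS a l ..< PS a (Suc l)}" using bl_iff[of x l] assms by auto
  next
    fix x assume x: "x \<in> {PS a l ..< PS a (Suc l)}"
    with le have "x < r" by auto
    then show "x \<in> {i. i < r \<and> bl a i = l}" using bl_iff[of x l] assms x by auto
  qed
qed

lemma block_card: assumes "l < length a"
  shows "card {i. i < r \<and> bl a i = l} = a ! l"
  unfolding block_set[OF assms] using PS_Suc[OF assms] by simp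

end


lemma det_rank1:
  fixes \<beta> \<gamma> :: real and w :: "nat \<Rightarrow> real"
  assumes s: "s \<ge> 1"
  shows "det (mat s s (\<lambda>(j,l). (if j = l then \<beta> else 0) - \<gamma> * w l))
       = \<beta> ^ (s - 1) * (\<beta> - \<gamma> * (\<Sum>l<s. w l))"
proof -
  define M where "M = mat s s (\<lambda>(j,l). (if j = l then \<beta> else 0) - \<gamma> * w l)"
  define X :: "real mat" where "X = mat s s (\<lambda>(i,j). if i = j then 1 else if j = 0 then 1 else 0)"
  define Y :: "real mat" where "Y = mat s s (\<lambda>(k,i). if k = i then 1 else if i = 0 then -1 else 0)"
  define T :: "real mat" where "T = mat s s (\<lambda>(k,j). if j = 0 then (if k = 0 then \<beta> - \<gamma> * (\<Sum>l<s. w l) else 0)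
      else (if k = j then \<beta> else 0) - (if k = 0 then \<gamma> * w j else 0))"
  have cM: "M \<in> carrier_mat s s" and cX: "X \<in> carrier_mat s s" and cY: "Y \<in> carrier_mat s s"
    and cT: "T \<in> carrier_mat s s" unfolding M_def X_def Y_def T_def by auto
  have MX: "M * X = mat s s (\<lambda>(k,j). if j = 0 then \<beta> - \<gamma> * (\<Sum>l<s. w l) else M $$ (k,j))"
  proof (rule eq_matI)
    fix k j assume k: "k < dim_row (mat s s (\<lambda>(k,j). if j = 0 then \<beta> - \<gamma> * (\<Sum>l<s. w l) else M $$ (k,j)))"
      and j: "j < dim_col (mat s s (\<lambda>(k,j). if j = 0 then \<beta> - \<gamma> * (\<Sum>l<s. w l) else M $$ (k,j)))"
    then have k: "k < s" and j: "j < s" by auto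
    have "(M * X) $$ (k,j) = (\<Sum>i\<in>{0..<s}. M $$ (k,i) * X $$ (i,j))"
      using k j cM cX by (simp add: scalar_prod_def)
    also have "\<dots> = (if j = 0 then \<beta> - \<gamma> * (\<Sum>l<s. w l) else M $$ (k,j))"
    proof (cases "j = 0")
      case True
      have "(\<Sum>i\<in>{0..<s}. M $$ (k,i) * X $$ (i,j)) = (\<Sum>i\<in>{0..<s}. (if k = i then \<beta> else 0) - \<gamma> * w i)"
        by (rule sum.cong) (auto simp: M_def X_def True k)
      also have "\<dots> = \<beta> - \<gamma> * (\<Sum>l<s. w l)"
        using k by (simp add: sum_subtractf sum_distrib_left atLeast0LessThan)
      finally show ?thesis using True by simp
    next
      case False
      have "(\<Sum>i\<in>{0..<s}. M $$ (k,i) * X $$ (i,j)) = (\<Sum>i\<in>{0..<s}. if i = j then M $$ (k,j) else 0)"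
        by (rule sum.cong) (auto simp: X_def False j)
      also have "\<dots> = M $$ (k,j)" using j by simp
      finally show ?thesis using False by simp
    qed
    finally show "(M * X) $$ (k,j) = mat s s (\<lambda>(k,j). if j = 0 then \<beta> - \<gamma> * (\<Sum>l<s. w l) else M $$ (k,j)) $$ (k,j)"
      using k j by simp
  qed (use cM cX in auto)
  define Z where "Z = mat s s (\<lambda>(k,j). if j = 0 then \<beta> - \<gamma> * (\<Sum>l<s. w l) else M $$ (k,j))"
  have cZ: "Z \<in> carrier_mat s s" unfolding Z_def by auto
  have YZ: "Y * Z = T"
  proof (rule eq_matI)
    fix k j assume "k < dim_row T" "j < dim_col T"
    then have k: "k < s" and j: "j < s" unfolding T_def by auto
    have "(Y * Z) $$ (k,j) = (\<Sum>i\<in>{0..<s}. Y $$ (k,i) * Z $$ (i,j))"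
      using k j cY cZ by (simp add: scalar_prod_def)
    also have "\<dots> = (\<Sum>i\<in>{0..<s}. (if i = k then Z $$ (k,j) else 0) - (if i = 0 \<and> k \<noteq> 0 then Z $$ (0,j) else 0))"
      by (rule sum.cong) (auto simp: Y_def k)
    also have "\<dots> = Z $$ (k,j) - (if k \<noteq> 0 then Z $$ (0,j) else 0)"
      using k s by (simp add: sum_subtractf sum.delta)
    also have "\<dots> = T $$ (k,j)"
      using k j s by (auto simp: Z_def T_def M_def)
    finally show "(Y * Z) $$ (k,j) = T $$ (k,j)" .
  qed (auto simp: Y_def T_def Z_def)
  have dY: "det Y = 1"
  proof -
    have "det Y = det (transpose_mat Y)" using cY by (simp add: det_transpose)
    also have "\<dots> = prod_list (diag_mat (transpose_mat Y))"
      by (rule det_upper_triangular[of _ s]) (auto simp: Y_def upper_triangular_def)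
    also have "diag_mat (transpose_mat Y) = map (\<lambda>x. 1) [0..<s]"
      unfolding diag_mat_def by (rule map_cong) (auto simp: Y_def)
    also have "prod_list \<dots> = 1" by (induct s) auto
    finally show ?thesis .
  qed
  have dX: "det X = 1"
  proof -
    have "det X = det (transpose_mat X)" using cX by (simp add: det_transpose)
    also have "\<dots> = prod_list (diag_mat (transpose_mat X))"
      by (rule det_upper_triangular[of _ s]) (auto simp: X_def upper_triangular_def)
    also have "diag_mat (transpose_mat X) = map (\<lambda>x. 1) [0..<s]"
      unfolding diag_mat_def by (rule map_cong) (auto simp: X_def)
    also have "prod_list \<dots> = 1" by (induct s) auto
    finally show ?thesis .
  qed
  have dT: "det T = \<beta> ^ (s - 1) * (\<beta> - \<gamma> * (\<Sum>l<s. w l))"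
  proof -
    have "det T = prod_list (diag_mat T)"
      by (rule det_upper_triangular[of _ s]) (auto simp: T_def upper_triangular_def)
    also have "diag_mat T = (\<beta> - \<gamma> * (\<Sum>l<s. w l)) # replicate (s - 1) \<beta>"
      using s by (auto simp: diag_mat_def T_def list_eq_iff_nth_eq nth_Cons split: nat.splits)
    finally show ?thesis by simp
  qed
  have "det T = det Y * (det M * det X)"
    unfolding YZ[symmetric] Z_def[symmetric] MX[folded Z_def, symmetric]
    using cY cM cX by (simp add: det_mult)
  then show ?thesis using dX dY dT unfolding M_def by simp
qed


context
  fixes a :: "nat list" and r :: nat
  assumes pos: "\<forall>x\<in>set a. x > 0" and sm: "sum_list a = r" and ne: "a \<noteq> []"
begin

lemma r_pos: "r > 0"
proof -
  obtain x xs where "a = x # xs" using ne by (cases a) auto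
  then show ?thesis using pos sm by auto
qed

lemma a_pos: "j < length a \<Longrightarrow> a ! j > 0" using pos by auto

lemma adj_WW: "u < r \<Longrightarrow> v < r \<Longrightarrow> adj r a u v \<longleftrightarrow> u \<noteq> v"
  unfolding adj_def by auto

lemma adj_WU: "u < r \<Longrightarrow> j < length a \<Longrightarrow> adj r a u (r + j) \<longleftrightarrow> bl a u = j"
  unfolding adj_def using bl_iff[OF pos sm, of u j] by (auto simp: PS_def)

lemma adj_UW: "u < r \<Longrightarrow> j < length a \<Longrightarrow> adj r a (r + j) u \<longleftrightarrow> bl a u = j"
  unfolding adj_def using bl_iff[OF pos sm, of u j] by (auto simp: PS_def)

lemma adj_UU: "adj r a (r + j) (r + l) = False"
  unfolding adj_def by auto

lemma deg_W: assumes u: "u < r" shows "deg r a u = r"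
proof -
  have b: "bl a u < length a" using bl_props[OF pos sm u] by auto
  have "{v. v < nverts r a \<and> adj r a u v} = ({0..<r} - {u}) \<union> {r + bl a u}"
  proof (rule equalityI; rule subsetI)
    fix v assume v: "v \<in> {v. v < nverts r a \<and> adj r a u v}"
    show "v \<in> ({0..<r} - {u}) \<union> {r + bl a u}"
    proof (cases "v < r")
      case True then show ?thesis using v adj_WW[OF u] by auto
    next
      case False
      then obtain j where j: "v = r + j" by (metis le_add_diff_inverse not_less)
      with v have "j < length a" by (auto simp: nverts_def)
      with v j adj_WU[OF u this] show ?thesis by auto
    qed
  next
    fix v assume "v \<in> ({0..<r} - {u}) \<union> {r + bl a u}"
    then show "v \<in> {v. v < nverts r a \<and> adj r a u v}"
      using adj_WW[OF u] adj_WU[OF u b] b by (auto simp: nverts_def)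
  qed
  then show ?thesis unfolding deg_def using u by (simp add: card_Diff_subset)
qed

lemma deg_U: assumes j: "j < length a" shows "deg r a (r + j) = a ! j"
proof -
  have "{v. v < nverts r a \<and> adj r a (r + j) v} = {i. i < r \<and> bl a i = j}"
  proof (rule equalityI; rule subsetI)
    fix v assume v: "v \<in> {v. v < nverts r a \<and> adj r a (r + j) v}"
    show "v \<in> {i. i < r \<and> bl a i = j}"
    proof (cases "v < r")
      case True then show ?thesis using v adj_UW[OF _ j] by auto
    next
      case False
      then obtain l where "v = r + l" by (metis le_add_diff_inverse not_less)
      with v adj_UU show ?thesis by auto
    qed
  next
    fix v assume "v \<in> {i. i < r \<and> bl a i = j}"
    then show "v \<in> {v. v < nverts r a \<and> adj r a (r + j) v}"
      using adj_UW[OF _ j] by (auto simp: nverts_def)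
  qed
  then show ?thesis unfolding deg_def using block_card[OF pos sm j] by simp
qed

end


definition Pm :: "nat \<Rightarrow> nat list \<Rightarrow> real mat" where
  "Pm r a = mat (nverts r a) (nverts r a) (\<lambda>(v,u). if adj r a v u then 1 / real (deg r a v) else 0)"

definition Nm :: "nat \<Rightarrow> nat list \<Rightarrow> real \<Rightarrow> real mat" where
  "Nm r a c = c \<cdot>\<^sub>m 1\<^sub>m (nverts r a) - Pm r a"

lemma char_std: "char_matrix (std_laplacian r a) t = Nm r a (1 - t)"
  unfolding char_matrix_def std_laplacian_def Nm_def Pm_def
  by (rule eq_matI) (auto simp: algebra_simps)

lemma char_sig: "char_matrix (signless_laplacian r a) t = - Nm r a (t - 1)"
  unfolding char_matrix_def signless_laplacian_def Nm_def Pm_def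
  by (rule eq_matI) (auto simp: algebra_simps)

context
  fixes a :: "nat list" and r :: nat
  assumes pos: "\<forall>x\<in>set a. x > 0" and sm: "sum_list a = r" and ne: "a \<noteq> []"
begin

lemma Nm_block: "Nm r a c = four_block_mat
   (mat r r (\<lambda>(i,k). if i = k then c else - 1 / real r))
   (mat r (length a) (\<lambda>(i,j). if bl a i = j then - 1 / real r else 0))
   (mat (length a) r (\<lambda>(j,i). if bl a i = j then - 1 / real (a ! j) else 0))
   (c \<cdot>\<^sub>m 1\<^sub>m (length a))"
proof (rule eq_matI)
  fix v u assume "v < dim_row (four_block_mat
   (mat r r (\<lambda>(i,k). if i = k then c else - 1 / real r))
   (mat r (length a) (\<lambda>(i,j). if bl a i = j then - 1 / real r else 0))
   (mat (length a) r (\<lambda>(j,i). if bl a i = j then - 1 / real (a ! j) else 0))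
   (c \<cdot>\<^sub>m 1\<^sub>m (length a)))" "u < dim_col (four_block_mat
   (mat r r (\<lambda>(i,k). if i = k then c else - 1 / real r))
   (mat r (length a) (\<lambda>(i,j). if bl a i = j then - 1 / real r else 0))
   (mat (length a) r (\<lambda>(j,i). if bl a i = j then - 1 / real (a ! j) else 0))
   (c \<cdot>\<^sub>m 1\<^sub>m (length a)))"
  then have v: "v < r + length a" and u: "u < r + length a" by auto
  show "Nm r a c $$ (v,u) = four_block_mat
   (mat r r (\<lambda>(i,k). if i = k then c else - 1 / real r))
   (mat r (length a) (\<lambda>(i,j). if bl a i = j then - 1 / real r else 0))
   (mat (length a) r (\<lambda>(j,i). if bl a i = j then - 1 / real (a ! j) else 0))
   (c \<cdot>\<^sub>m 1\<^sub>m (length a)) $$ (v,u)"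
  proof (cases "v < r")
    case vr: True
    show ?thesis
    proof (cases "u < r")
      case True
      then show ?thesis using vr v u adj_WW[OF pos sm ne vr True] deg_W[OF pos sm ne vr]
        by (simp add: Nm_def Pm_def nverts_def)
    next
      case False
      then obtain j where j: "u = r + j" by (metis le_add_diff_inverse not_less)
      with u have jl: "j < length a" by simp
      show ?thesis using vr v u j adj_WU[OF pos sm ne vr jl] deg_W[OF pos sm ne vr]
        by (simp add: Nm_def Pm_def nverts_def)
    qed
  next
    case False
    then obtain j where j: "v = r + j" by (metis le_add_diff_inverse not_less)
    with v have jl: "j < length a" by simp
    show ?thesis
    proof (cases "u < r")
      case True
      then show ?thesis using j v u adj_UW[OF pos sm ne True jl] deg_U[OF pos sm ne jl]
        by (simp add: Nm_def Pm_def nverts_def)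
    next
      case False
      then obtain l where l: "u = r + l" by (metis le_add_diff_inverse not_less)
      with u have ll: "l < length a" by simp
      show ?thesis using j l v u adj_UU[OF pos sm ne]
        by (simp add: Nm_def Pm_def nverts_def)
    qed
  qed
qed (auto simp: Nm_def Pm_def nverts_def)

end


context
  fixes a :: "nat list" and r :: nat
  assumes pos: "\<forall>x\<in>set a. x > 0" and sm: "sum_list a = r" and ne: "a \<noteq> []"
begin

lemma sum_bl_const: assumes l: "l < length a"
  shows "(\<Sum>i\<in>{0..<r}. if bl a i = l then (K::real) else 0) = real (a ! l) * K"
proof -
  have "(\<Sum>i\<in>{0..<r}. if bl a i = l then K else 0) = (\<Sum>i\<in>{0..<r} \<inter> {i. bl a i = l}. K)"
    by (simp add: sum.If_cases)
  also have "{0..<r} \<inter> {i. bl a i = l} = {i. i < r \<and> bl a i = l}" by auto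
  also have "(\<Sum>i\<in>\<dots>. K) = real (a ! l) * K" using block_card[OF pos sm l] by simp
  finally show ?thesis .
qed

lemma sum_a: "(\<Sum>l<length a. real (a ! l)) = real r"
proof -
  have "real r = real (\<Sum>l = 0..<length a. a ! l)" using sm sum_list_sum_nth[of a] by simp
  then show ?thesis by (simp add: atLeast0LessThan)
qed

lemma det_Nm: assumes al: "c + 1 / real r \<noteq> 0"
  shows "det (Nm r a c) = (c + 1 / real r) ^ r
     * (c - 1 / (real r * (c + 1 / real r))) ^ (length a - 1)
     * ((c - 1 / (real r * (c + 1 / real r))) - c / (c + 1 / real r))"
proof -
  define s where "s = length a"
  define \<alpha> where "\<alpha> = c + 1 / real r"
  have rp: "real r > 0" using r_pos[OF pos sm ne] by simp
  have s1: "s \<ge> 1" using ne unfolding s_def by (cases a) auto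
  have bls: "\<And>i. i < r \<Longrightarrow> bl a i < s" using bl_props[OF pos sm] unfolding s_def by auto
  define A1 where "A1 = mat r r (\<lambda>(i,k). if i = k then c else - 1 / real r)"
  define B1 where "B1 = mat r s (\<lambda>(i,j). if bl a i = j then - 1 / real r else 0)"
  define C1 where "C1 = mat s r (\<lambda>(j,i). if bl a i = j then - 1 / real (a ! j) else 0)"
  define C2 where "C2 = mat s r (\<lambda>(j,i). (if bl a i = j then - 1 / real (a ! j) else 0) - c)"
  define J :: "real mat" where "J = mat s r (\<lambda>_. - 1)"
  define U2 where "U2 = mat r s (\<lambda>(i,j). if bl a i = j then - 1 / (real r * \<alpha>) else 0)"
  define \<beta> where "\<beta> = c - 1 / (real r * \<alpha>)"
  define \<gamma> where "\<gamma> = c / (real r * \<alpha>)"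
  define S where "S = mat s s (\<lambda>(j,l). (if j = l then \<beta> else 0) - \<gamma> * real (a ! l))"
  define X1 where "X1 = four_block_mat (1\<^sub>m r) (0\<^sub>m r s) J (1\<^sub>m s)"
  define Lm where "Lm = four_block_mat (\<alpha> \<cdot>\<^sub>m 1\<^sub>m r) (0\<^sub>m r s) C2 (1\<^sub>m s)"
  define Um where "Um = four_block_mat (1\<^sub>m r) U2 (0\<^sub>m s r) S"
  have N: "Nm r a c = four_block_mat A1 B1 C1 (c \<cdot>\<^sub>m 1\<^sub>m s)"
    unfolding A1_def B1_def C1_def s_def by (rule Nm_block[OF pos sm ne])
  have cA1: "A1 \<in> carrier_mat r r" and cB1: "B1 \<in> carrier_mat r s" and cC1: "C1 \<in> carrier_mat s r"
    and cC2: "C2 \<in> carrier_mat s r" and cJ: "J \<in> carrier_mat s r" and cU2: "U2 \<in> carrier_mat r s"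
    and cS: "S \<in> carrier_mat s s"
    unfolding A1_def B1_def C1_def C2_def J_def U2_def S_def by auto
  have e1: "A1 * 1\<^sub>m r + B1 * J = \<alpha> \<cdot>\<^sub>m 1\<^sub>m r"
  proof (rule eq_matI)
    fix i k assume "i < dim_row (\<alpha> \<cdot>\<^sub>m 1\<^sub>m r)" "k < dim_col (\<alpha> \<cdot>\<^sub>m 1\<^sub>m r)"
    then have i: "i < r" and k: "k < r" by auto
    have "(B1 * J) $$ (i,k) = (\<Sum>j\<in>{0..<s}. if bl a i = j then 1 / real r else 0)"
      using i k cB1 cJ by (auto simp: scalar_prod_def B1_def J_def sum_negf)
    also have "\<dots> = 1 / real r" using bls[OF i] by (simp add: sum.delta')
    finally show "(A1 * 1\<^sub>m r + B1 * J) $$ (i,k) = (\<alpha> \<cdot>\<^sub>m 1\<^sub>m r) $$ (i,k)"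
      using i k cA1 cB1 cJ by (auto simp: A1_def \<alpha>_def)
  qed (use cA1 cB1 cJ in auto)
  have e3: "C1 * 1\<^sub>m r + (c \<cdot>\<^sub>m 1\<^sub>m s) * J = C2"
  proof (rule eq_matI)
    fix j i assume "j < dim_row C2" "i < dim_col C2"
    then have j: "j < s" and i: "i < r" using cC2 by auto
    have "((c \<cdot>\<^sub>m 1\<^sub>m s) * J) $$ (j,i) = (\<Sum>l\<in>{0..<s}. if j = l then - c else 0)"
      using i j cJ by (auto simp: scalar_prod_def J_def sum_negf sum_distrib_left[symmetric])
    also have "\<dots> = - c" using j by (simp add: sum.delta)
    finally show "(C1 * 1\<^sub>m r + (c \<cdot>\<^sub>m 1\<^sub>m s) * J) $$ (j,i) = C2 $$ (j,i)"
      using i j cC1 cJ by (auto simp: C1_def C2_def)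
  qed (use cC1 cC2 cJ in auto)
  have NX: "Nm r a c * X1 = four_block_mat (\<alpha> \<cdot>\<^sub>m 1\<^sub>m r) B1 C2 (c \<cdot>\<^sub>m 1\<^sub>m s)"
    unfolding N X1_def
    by (subst mult_four_block_mat[OF cA1 cB1 cC1 _ _ _ cJ], auto simp: e1 e3 right_mult_one_mat[OF cB1] cB1 right_mult_zero_mat[OF cA1] right_mult_zero_mat[OF cC1])
  have f2: "(\<alpha> \<cdot>\<^sub>m 1\<^sub>m r) * U2 = B1"
  proof (rule eq_matI)
    fix i j assume "i < dim_row B1" "j < dim_col B1"
    then have i: "i < r" and j: "j < s" using cB1 by auto
    have ee: "(\<lambda>k. \<alpha> * (if k = i then 1 else 0) * U2 $$ (k, j)) = (\<lambda>k. if k = i then \<alpha> * U2 $$ (i,j) else 0)"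
      by auto
    have "((\<alpha> \<cdot>\<^sub>m 1\<^sub>m r) * U2) $$ (i,j) = (\<Sum>k\<in>{0..<r}. \<alpha> * (if k = i then 1 else 0) * U2 $$ (k, j))"
      using i j cU2 by (simp add: scalar_prod_def)
    also have "\<dots> = (\<Sum>k\<in>{0..<r}. if k = i then \<alpha> * U2 $$ (i,j) else 0)"
      by (rule sum.cong) auto
    also have "\<dots> = \<alpha> * U2 $$ (i,j)" using i by simp
    also have "\<dots> = B1 $$ (i,j)" using i j al rp by (auto simp: U2_def B1_def \<alpha>_def)
    finally show "((\<alpha> \<cdot>\<^sub>m 1\<^sub>m r) * U2) $$ (i,j) = B1 $$ (i,j)" .
  qed (use cU2 cB1 in auto)
  have f4: "C2 * U2 + 1\<^sub>m s * S = c \<cdot>\<^sub>m 1\<^sub>m s"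
  proof (rule eq_matI)
    fix j l assume "j < dim_row (c \<cdot>\<^sub>m 1\<^sub>m s)" "l < dim_col (c \<cdot>\<^sub>m 1\<^sub>m s)"
    then have j: "j < s" and l: "l < s" by auto
    have "(C2 * U2) $$ (j,l) = (\<Sum>i\<in>{0..<r}. if bl a i = l then
         (if l = j then 1 / (real (a ! j) * (real r * \<alpha>)) else 0) + c / (real r * \<alpha>) else 0)"
      using j l cC2 cU2 by (auto simp: scalar_prod_def C2_def U2_def diff_divide_distrib intro!: sum.cong)
    also have "\<dots> = real (a ! l) * ((if l = j then 1 / (real (a ! j) * (real r * \<alpha>)) else 0) + c / (real r * \<alpha>))"
      using l unfolding s_def by (rule sum_bl_const)
    also have "\<dots> = (if l = j then 1 / (real r * \<alpha>) else 0) + \<gamma> * real (a ! l)"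
      using a_pos[OF pos sm ne, of l] l unfolding s_def \<gamma>_def by (auto simp: field_simps)
    finally show "(C2 * U2 + 1\<^sub>m s * S) $$ (j,l) = (c \<cdot>\<^sub>m 1\<^sub>m s) $$ (j,l)"
      using j l cC2 cU2 cS by (auto simp: S_def \<beta>_def)
  qed (use cC2 cU2 cS in auto)
  have LU: "Lm * Um = four_block_mat (\<alpha> \<cdot>\<^sub>m 1\<^sub>m r) B1 C2 (c \<cdot>\<^sub>m 1\<^sub>m s)"
    unfolding Lm_def Um_def
    by (subst mult_four_block_mat[OF _ _ cC2 _ _ cU2 _ cS], auto simp: f2 f4 cC2 cB1 left_mult_zero_mat[OF cS] right_mult_one_mat[OF cC2])
  have cN: "Nm r a c \<in> carrier_mat (r + s) (r + s)" unfolding N using cA1 cB1 cC1 by auto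
  have cX1: "X1 \<in> carrier_mat (r + s) (r + s)" unfolding X1_def using cJ by auto
  have cLm: "Lm \<in> carrier_mat (r + s) (r + s)" unfolding Lm_def using cC2 by auto
  have cUm: "Um \<in> carrier_mat (r + s) (r + s)" unfolding Um_def using cU2 cS by auto
  have dX1: "det X1 = 1" unfolding X1_def
    by (subst det_four_block_mat_upper_right_zero[OF _ refl cJ], auto)
  have dLm: "det Lm = \<alpha> ^ r" unfolding Lm_def
    by (subst det_four_block_mat_upper_right_zero[OF _ refl cC2], auto)
  have dUm: "det Um = det S" unfolding Um_def
    by (subst det_four_block_mat_lower_left_zero[OF _ cU2 refl cS], auto)
  have dS: "det S = \<beta> ^ (s - 1) * (\<beta> - \<gamma> * real r)"
    unfolding S_def using det_rank1[OF s1, of \<beta> \<gamma> "\<lambda>l. real (a ! l)"] sum_a unfolding s_def by simp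
  have "det (Nm r a c) = det (Nm r a c) * det X1" using dX1 by simp
  also have "\<dots> = det (Lm * Um)" using det_mult[OF cN cX1] NX LU by simp
  also have "\<dots> = \<alpha> ^ r * (\<beta> ^ (s - 1) * (\<beta> - \<gamma> * real r))" using det_mult[OF cLm cUm] dLm dUm dS by simp
  finally have fin: "det (Nm r a c) = \<alpha> ^ r * (\<beta> ^ (s - 1) * (\<beta> - \<gamma> * real r))" .
  have "\<gamma> * real r = c / \<alpha>" unfolding \<gamma>_def using rp by simp
  with fin have "det (Nm r a c) = \<alpha> ^ r * \<beta> ^ (s - 1) * (\<beta> - c / \<alpha>)" by simp
  then show ?thesis unfolding \<alpha>_def \<beta>_def s_def .
qed

end


lemma poly_eq_cofinite: fixes p q :: "real poly"
  assumes "\<And>t. t \<noteq> z \<Longrightarrow> poly p t = poly q t" shows "p = q"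
proof (rule ccontr)
  assume "p \<noteq> q" then have "p - q \<noteq> 0" by simp
  from poly_roots_finite[OF this] have fin: "finite {x. poly (p - q) x = 0}" .
  have "UNIV - {z} \<subseteq> {x. poly (p - q) x = 0}" using assms by auto
  from finite_subset[OF this fin] have "finite (insert z (UNIV - {z}))" by simp
  then have "finite (UNIV :: real set)" by (simp add: insert_UNIV)
  then show False by (simp add: infinite_UNIV_char_0)
qed

lemma det_neg: "A \<in> carrier_mat n n \<Longrightarrow> det (- A) = (-1) ^ n * det (A :: real mat)"
proof -
  assume A: "A \<in> carrier_mat n n"
  have "- A = (-1) \<cdot>\<^sub>m A" by (rule eq_matI) (use A in auto)
  then show ?thesis using A by simp
qed

lemma Nm_carrier: "Nm r a c \<in> carrier_mat (nverts r a) (nverts r a)"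
  unfolding Nm_def Pm_def by auto

lemma quad_id: fixes r t :: real assumes r: "r > 0" and q: "q = 4 * r + 1"
  and sq: "S = sqrt q"
  shows "(t - (2 * r + e - S) / (2 * r)) * (t - (2 * r + e + S) / (2 * r))
       = t ^ 2 - (2 * r + e) / r * t + ((2 * r + e) ^ 2 - q) / (4 * r ^ 2)"
proof -
  have "S ^ 2 = q" using sq q r by simp
  then show ?thesis using r by (simp add: field_simps power2_eq_square)
qed

lemma alg1: fixes c R :: real and r s :: nat
  assumes al: "c + 1 / R \<noteq> 0" and R: "R > 0" and s1: "s \<ge> 1" and sr: "s \<le> r"
  shows "(c + 1 / R) ^ r * (c - 1 / (R * (c + 1 / R))) ^ (s - 1)
     * ((c - 1 / (R * (c + 1 / R))) - c / (c + 1 / R))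
   = (c + 1 / R) ^ (r - s + 1) * (c ^ 2 + c / R - 1 / R) ^ (s - 1) * (c - 1)"
proof -
  define \<alpha> where "\<alpha> = c + 1 / R"
  define \<beta> where "\<beta> = c - 1 / (R * \<alpha>)"
  have h1: "1 + R * c \<noteq> 0" using al R by (simp add: field_simps)
  have h: "R + R * (R * c) \<noteq> 0"
  proof -
    have "R + R * (R * c) = R * (1 + R * c)" by (simp add: algebra_simps)
    then show ?thesis using h1 R by simp
  qed
  have an: "\<alpha> \<noteq> 0" using al unfolding \<alpha>_def .
  have "\<alpha> * \<beta> = \<alpha> * c - \<alpha> / (R * \<alpha>)" unfolding \<beta>_def by (simp add: right_diff_distrib)
  also have "\<alpha> / (R * \<alpha>) = 1 / R" using an R by simp
  finally have ab0: "\<alpha> * \<beta> = \<alpha> * c - 1 / R" .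
  have "\<alpha> * c - 1 / R = c ^ 2 + c / R - 1 / R" unfolding \<alpha>_def
    by (simp add: algebra_simps power2_eq_square)
  with ab0 have ab: "\<alpha> * \<beta> = c ^ 2 + c / R - 1 / R" by simp
  have "\<alpha> * (\<beta> - c / \<alpha>) = \<alpha> * \<beta> - c" using an by (simp add: right_diff_distrib)
  also have "\<dots> = c ^ 2 + c / R - 1 / R - c" using ab by simp
  also have "\<dots> = (c - 1) * \<alpha>" unfolding \<alpha>_def by (simp add: algebra_simps power2_eq_square add_divide_distrib[symmetric])
  finally have ab2: "\<alpha> * (\<beta> - c / \<alpha>) = (c - 1) * \<alpha>" .
  have rr: "r = (r - s) + (s - 1) + 1" using s1 sr by simp
  have "\<alpha> ^ r * \<beta> ^ (s - 1) * (\<beta> - c / \<alpha>) = \<alpha> ^ (r - s) * (\<alpha> * \<beta>) ^ (s - 1) * (\<alpha> * (\<beta> - c / \<alpha>))"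
    by (subst rr) (simp add: power_add power_mult_distrib)
  also have "\<dots> = \<alpha> ^ (r - s + 1) * (c ^ 2 + c / R - 1 / R) ^ (s - 1) * (c - 1)"
    unfolding ab ab2 by simp
  finally show ?thesis unfolding \<alpha>_def \<beta>_def .
qed



lemma poly_lin: "poly [:- x, 1:] (t::real) = t - x" by simp
lemma poly_X: "poly [:0, 1:] (t::real) = t" by simp

theorem mainTheorem6:
  fixes r s :: nat and a :: "nat list"
  assumes "r \<ge> 4" and "2 \<le> s" and "s \<le> r - 1"
    and "length a = s" and "\<forall>x\<in>set a. x > 0" and "sum_list a = r"
  shows "char_poly (std_laplacian r a) =
           [:- ((2 * real r + 1 - sqrt (4 * real r + 1)) / (2 * real r)), 1:] ^ (s - 1)
         * [:- ((2 * real r + 1 + sqrt (4 * real r + 1)) / (2 * real r)), 1:] ^ (s - 1)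
         * [:- (1 + 1 / real r), 1:] ^ (r - s + 1)
         * [:0, 1:] \<and>
         char_poly (signless_laplacian r a) =
           [:- ((2 * real r - 1 - sqrt (4 * real r + 1)) / (2 * real r)), 1:] ^ (s - 1)
         * [:- ((2 * real r - 1 + sqrt (4 * real r + 1)) / (2 * real r)), 1:] ^ (s - 1)
         * [:- (1 - 1 / real r), 1:] ^ (r - s + 1)
         * [:- 2, 1:]"
proof -
  note pos = assms(5) and sm = assms(6)
  have ne: "a \<noteq> []" using assms(2,4) by auto
  define R where "R = real r"
  have R: "R > 0" using assms(1) unfolding R_def by simp
  have s1: "s \<ge> 1" and sr: "s \<le> r" using assms(2,3) by auto
  have cs: "signless_laplacian r a \<in> carrier_mat (nverts r a) (nverts r a)"
    unfolding signless_laplacian_def by auto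
  have cl: "std_laplacian r a \<in> carrier_mat (nverts r a) (nverts r a)"
    unfolding std_laplacian_def by auto
  have nv: "nverts r a = r + s" unfolding nverts_def using assms(4) by simp
  have DN: "det (Nm r a c) = (c + 1 / R) ^ (r - s + 1) * (c ^ 2 + c / R - 1 / R) ^ (s - 1) * (c - 1)"
    if al: "c + 1 / R \<noteq> 0" for c
    using det_Nm[OF pos sm ne, of c] al alg1[OF _ R s1 sr, of c] assms(4) unfolding R_def by simp
  have sig: "char_poly (signless_laplacian r a) =
           [:- ((2 * real r - 1 - sqrt (4 * real r + 1)) / (2 * real r)), 1:] ^ (s - 1)
         * [:- ((2 * real r - 1 + sqrt (4 * real r + 1)) / (2 * real r)), 1:] ^ (s - 1)
         * [:- (1 - 1 / real r), 1:] ^ (r - s + 1)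
         * [:- 2, 1:]"
  proof (rule poly_eq_cofinite[where z = "1 - 1 / R"])
    fix t assume t: "t \<noteq> 1 - 1 / R"
    have al: "(t - 1) + 1 / R \<noteq> 0" using t by auto
    have "poly (char_poly (signless_laplacian r a)) t = det (Nm r a (t - 1))"
      unfolding char_poly_matrix[OF cs] char_sig by simp
    also have "\<dots> = (t - (1 - 1 / R)) ^ (r - s + 1) * ((t - 1) ^ 2 + (t - 1) / R - 1 / R) ^ (s - 1) * (t - 2)"
      unfolding DN[OF al] by (simp add: algebra_simps)
    also have "(t - 1) ^ 2 + (t - 1) / R - 1 / R =
        (t - (2 * R + (-1) - sqrt (4 * R + 1)) / (2 * R)) * (t - (2 * R + (-1) + sqrt (4 * R + 1)) / (2 * R))"
      unfolding quad_id[OF R refl refl] using R by (simp add: field_simps power2_eq_square)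
    finally have L: "poly (char_poly (signless_laplacian r a)) t = (t - (1 - 1 / R)) ^ (r - s + 1) *
       ((t - (2 * R + - 1 - sqrt (4 * R + 1)) / (2 * R)) ^ (s - 1) * (t - (2 * R + - 1 + sqrt (4 * R + 1)) / (2 * R)) ^ (s - 1)) * (t - 2)"
      by (simp add: power_mult_distrib)
    have P: "poly ([:- ((2 * real r - 1 - sqrt (4 * real r + 1)) / (2 * real r)), 1:] ^ (s - 1)
         * [:- ((2 * real r - 1 + sqrt (4 * real r + 1)) / (2 * real r)), 1:] ^ (s - 1)
         * [:- (1 - 1 / real r), 1:] ^ (r - s + 1)
         * [:- 2, 1:]) t = (t - (2 * R + - 1 - sqrt (4 * R + 1)) / (2 * R)) ^ (s - 1) * (t - (2 * R + - 1 + sqrt (4 * R + 1)) / (2 * R)) ^ (s - 1)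
         * (t - (1 - 1 / R)) ^ (r - s + 1) * (t - 2)"
      unfolding R_def by (simp only: poly_mult poly_power poly_lin poly_X diff_minus_eq_add diff_conv_add_uminus)
    show "poly (char_poly (signless_laplacian r a)) t = poly ([:- ((2 * real r - 1 - sqrt (4 * real r + 1)) / (2 * real r)), 1:] ^ (s - 1)
         * [:- ((2 * real r - 1 + sqrt (4 * real r + 1)) / (2 * real r)), 1:] ^ (s - 1)
         * [:- (1 - 1 / real r), 1:] ^ (r - s + 1)
         * [:- 2, 1:]) t"
      unfolding L P by (simp only: mult_ac)
  qed
  have std: "char_poly (std_laplacian r a) =
           [:- ((2 * real r + 1 - sqrt (4 * real r + 1)) / (2 * real r)), 1:] ^ (s - 1)
         * [:- ((2 * real r + 1 + sqrt (4 * real r + 1)) / (2 * real r)), 1:] ^ (s - 1)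
         * [:- (1 + 1 / real r), 1:] ^ (r - s + 1)
         * [:0, 1:]"
  proof (rule poly_eq_cofinite[where z = "1 + 1 / R"])
    fix t assume t: "t \<noteq> 1 + 1 / R"
    have al: "(1 - t) + 1 / R \<noteq> 0" using t by auto
    have "poly (char_poly (std_laplacian r a)) t = (-1) ^ (r + s) * det (Nm r a (1 - t))"
      unfolding char_poly_matrix[OF cl] char_std using det_neg[OF Nm_carrier] nv by simp
    also have "\<dots> = (-1) ^ (r + s) * ((1 - t + 1 / R) ^ (r - s + 1) * ((1 - t) ^ 2 + (1 - t) / R - 1 / R) ^ (s - 1) * (1 - t - 1))"
      unfolding DN[OF al] by simp
    also have "1 - t + 1 / R = (-1) * (t - (1 + 1 / R))" by simp
    also have "1 - t - 1 = (-1) * t" by simp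
    also have "(1 - t) ^ 2 + (1 - t) / R - 1 / R =
        (t - (2 * R + 1 - sqrt (4 * R + 1)) / (2 * R)) * (t - (2 * R + 1 + sqrt (4 * R + 1)) / (2 * R))"
      unfolding quad_id[OF R refl refl] using R by (simp add: field_simps power2_eq_square)
    also have "(-1) ^ (r + s) * (((-1) * (t - (1 + 1 / R))) ^ (r - s + 1) * X ^ (s - 1) * ((-1) * t))
       = ((-1::real) ^ (r + s) * (-1) ^ (r - s + 1) * (-1)) * ((t - (1 + 1 / R)) ^ (r - s + 1) * X ^ (s - 1) * t)"
      for X by (simp only: power_mult_distrib mult_ac)
    also have "(-1::real) ^ (r + s) * (-1) ^ (r - s + 1) * (-1) = 1"
    proof -
      have "(-1::real) ^ (r + s) * (-1) ^ (r - s + 1) * (-1) = (-1) ^ (2 * (r + 1))"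
        using sr by (simp add: power_add[symmetric])
      also have "\<dots> = 1" by (simp add: power_mult)
      finally show ?thesis .
    qed
    finally have L: "poly (char_poly (std_laplacian r a)) t = 1 * ((t - (1 + 1 / R)) ^ (r - s + 1) *
       ((t - (2 * R + 1 - sqrt (4 * R + 1)) / (2 * R)) * (t - (2 * R + 1 + sqrt (4 * R + 1)) / (2 * R))) ^ (s - 1) * t)" .
    have P: "poly ([:- ((2 * real r + 1 - sqrt (4 * real r + 1)) / (2 * real r)), 1:] ^ (s - 1)
         * [:- ((2 * real r + 1 + sqrt (4 * real r + 1)) / (2 * real r)), 1:] ^ (s - 1)
         * [:- (1 + 1 / real r), 1:] ^ (r - s + 1)
         * [:0, 1:]) t = (t - (2 * R + 1 - sqrt (4 * R + 1)) / (2 * R)) ^ (s - 1) * (t - (2 * R + 1 + sqrt (4 * R + 1)) / (2 * R)) ^ (s - 1)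
         * (t - (1 + 1 / R)) ^ (r - s + 1) * t"
      unfolding R_def by (simp only: poly_mult poly_power poly_lin poly_X diff_minus_eq_add diff_conv_add_uminus)
    show "poly (char_poly (std_laplacian r a)) t = poly ([:- ((2 * real r + 1 - sqrt (4 * real r + 1)) / (2 * real r)), 1:] ^ (s - 1)
         * [:- ((2 * real r + 1 + sqrt (4 * real r + 1)) / (2 * real r)), 1:] ^ (s - 1)
         * [:- (1 + 1 / real r), 1:] ^ (r - s + 1)
         * [:0, 1:]) t"
      unfolding L P power_mult_distrib by (simp only: mult_ac mult_1_left)
  qed
  show ?thesis using sig std by simp
qed


end
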